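(* Let $G$ be a graph on $V$, $W\subseteq V$ reducible in $G$, and $v,w\in V\setminus W$ (possibly $v=w$). Then $v$ and $w$ are joined by an edge in $\Gamma_W(G)$ if and only if $\operatorname{rank}_G(W\cup\{v\},W\cup\{w\})>\operatorname{rank}_G(W)$. If moreover the principal submatrix of the adjacency matrix $A$ on $W$ is nonsingular, this holds if and only if $\det\big(A_{W\cup\{v\},\,W\cup\{w\}}\big)\neq 0$ over $\mathbf F_2$.
   Context: A graph means a finite simple graph in which loops are allowed, with adjacency matrix $A$ over $\mathbf F_2$ ($A_{vv}=1$ iff $v$ has a loop). Let $\mathcal V$ be the $\mathbf F_2$-vector space with basis $V$ and $\mathcal E(x,y)=x^TAy$. For $W\subseteq V$, $\langle W\rangle$ is the span of $W$ and $\langle W\rangle^{\perp\mathcal E}=\{x:\mathcal E(x,w)=0\ \forall w\in\langle W\rangle\}$. $W$ is reducible in $G$ if $\langle W\rangle+\langle W\rangle^{\perp\mathcal E}=\mathcal V$. For reducible $W$, $\mathcal E^W(x_1,x_2)=\mathcal E(x_1',x_2')$ where $x_i'\in\langle W\rangle^{\perp\mathcal E}$ with $x_i-x_i'\in\langle W\rangle$, and $\Gamma_W(G)$ is the graph on $V\setminus W$ in which $v,w$ (possibly equal) are joined iff $\mathcal E^W(v,w)=1$. $\operatorname{rank}_G(W_1,W_2)$ denotes the $\mathbf F_2$-rank of the submatrix of $A$ with rows $W_1$ and columns $W_2$, and $\operatorname{rank}_G(W)=\operatorname{rank}_G(W,W)$; $A_{X,Y}$ is the submatrix with rows $X$, columns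 $Y$. *)

theory Defs
  imports Main "HOL-Library.FuncSet"
begin

text \<open>A graph on the finite vertex set V is given by a symmetric adjacency
relation A (loops allowed: A u u means u has a loop).  The F2-vector space
with basis V is modelled by the subsets of V (a vector is identified with its
support); vector addition is symmetric difference, and the basis vector of a
vertex u is the singleton {u}.\<close>

definition vadd :: "'v set \<Rightarrow> 'v set \<Rightarrow> 'v set" where
  "vadd x y = (x - y) \<union> (y - x)"

definition span_basis :: "'v set \<Rightarrow> 'v set set" where
  "span_basis W = Pow W"

text \<open>The bilinear form E(x,y) = x^T A y over F2 (True = 1).\<close>
definition bform :: "('v \<Rightarrow> 'v \<Rightarrow> bool) \<Rightarrow> 'v set \<Rightarrow> 'v set \<Rightarrow> bool" where
  "bform A x y = odd (card {(a, b). a \<in> x \<and> b \<in> y \<and> A a b})"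

definition orth :: "'v set \<Rightarrow> ('v \<Rightarrow> 'v \<Rightarrow> bool) \<Rightarrow> 'v set \<Rightarrow> 'v set set" where
  "orth V A W = {x. x \<subseteq> V \<and> (\<forall>y \<in> span_basis W. \<not> bform A x y)}"

definition reducible :: "'v set \<Rightarrow> ('v \<Rightarrow> 'v \<Rightarrow> bool) \<Rightarrow> 'v set \<Rightarrow> bool" where
  "reducible V A W \<longleftrightarrow>
     (\<forall>z. z \<subseteq> V \<longrightarrow> (\<exists>a \<in> span_basis W. \<exists>b \<in> orth V A W. z = vadd a b))"

definition proj_orth :: "'v set \<Rightarrow> ('v \<Rightarrow> 'v \<Rightarrow> bool) \<Rightarrow> 'v set \<Rightarrow> 'v set \<Rightarrow> 'v set" where
  "proj_orth V A W x = (SOME x'. x' \<in> orth V A W \<and> vadd x x' \<in> span_basis W)"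

definition bformW :: "'v set \<Rightarrow> ('v \<Rightarrow> 'v \<Rightarrow> bool) \<Rightarrow> 'v set \<Rightarrow> 'v set \<Rightarrow> 'v set \<Rightarrow> bool" where
  "bformW V A W x1 x2 = bform A (proj_orth V A W x1) (proj_orth V A W x2)"

definition Gamma :: "'v set \<Rightarrow> ('v \<Rightarrow> 'v \<Rightarrow> bool) \<Rightarrow> 'v set \<Rightarrow> 'v set \<times> ('v \<Rightarrow> 'v \<Rightarrow> bool)" where
  "Gamma V A W = (V - W, \<lambda>v w. v \<in> V - W \<and> w \<in> V - W \<and> bformW V A W {v} {w})"

text \<open>A family
of rows indexed by S is linearly independent over F2 iff no nonempty
subfamily sums to zero.\<close>
definition rows_indep :: "('v \<Rightarrow> 'v \<Rightarrow> bool) \<Rightarrow> 'v set \<Rightarrow> 'v set \<Rightarrow> bool" where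
  "rows_indep A S C \<longleftrightarrow>
     (\<forall>T. T \<subseteq> S \<and> T \<noteq> {} \<longrightarrow> (\<exists>c \<in> C. odd (card {u \<in> T. A u c})))"

definition rank_F2 :: "('v \<Rightarrow> 'v \<Rightarrow> bool) \<Rightarrow> 'v set \<Rightarrow> 'v set \<Rightarrow> nat" where
  "rank_F2 A R C = Max (card ` {S. S \<subseteq> R \<and> rows_indep A S C})"

text \<open>Determinant over F2 of the square submatrix A_{R,C} (|R| = |C|):
since -1 = 1 in F2, det = sum over bijections R -> C of the products of the
entries, i.e. the parity of the number of such bijections supported by A.
(Up to the choice of orderings of R and C, which only affects the sign.)
True means det = 1, i.e. det is nonzero.\<close>
definition det_F2 :: "('v \<Rightarrow> 'v \<Rightarrow> bool) \<Rightarrow> 'v set \<Rightarrow> 'v set \<Rightarrow> bool" where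
  "det_F2 A R C = odd (card {f \<in> extensional R. bij_betw f R C \<and> (\<forall>u \<in> R. A u (f u))})"

end

theory Submission
  imports Defs
begin


definition vecr :: "('v \<Rightarrow> 'v \<Rightarrow> bool) \<Rightarrow> 'v set \<Rightarrow> 'v set \<Rightarrow> 'v set" where
  "vecr A C T = {c\<in>C. odd (card {u\<in>T. A u c})}"

lemma rows_indep_vecr: "rows_indep A S C \<longleftrightarrow> (\<forall>T. T \<subseteq> S \<and> T \<noteq> {} \<longrightarrow> vecr A C T \<noteq> {})"
  unfolding rows_indep_def vecr_def by auto

lemma card_filter_sum: "finite T \<Longrightarrow> card {u\<in>T. P u} = (\<Sum>u\<in>T. if P u then 1 else 0)"
  by (simp add: sum.If_cases Int_def conj_commute)

lemma card_swap: assumes "finite T" "finite B"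
  shows "(\<Sum>u\<in>T. card {b\<in>B. A u b}) = (\<Sum>b\<in>B. card {u\<in>T. A u b})"
proof -
  have "(\<Sum>u\<in>T. card {b\<in>B. A u b}) = (\<Sum>u\<in>T. \<Sum>b\<in>B. if A u b then (1::nat) else 0)"
    using assms by (simp add: card_filter_sum)
  also have "\<dots> = (\<Sum>b\<in>B. \<Sum>u\<in>T. if A u b then (1::nat) else 0)" by (rule sum.swap)
  also have "\<dots> = (\<Sum>b\<in>B. card {u\<in>T. A u b})" using assms by (simp add: card_filter_sum)
  finally show ?thesis .
qed

lemma card_symdiff_parity: assumes "finite X" "finite Y"
  shows "even (card ((X - Y) \<union> (Y - X))) \<longleftrightarrow> (even (card X) \<longleftrightarrow> even (card Y))"
proof -
  have e1: "X = (X - Y) \<union> (X \<inter> Y)" by blast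
  have e2: "Y = (Y - X) \<union> (X \<inter> Y)" by blast
  have a: "card X = card (X - Y) + card (X \<inter> Y)"
    by (subst e1, rule card_Un_disjoint) (use assms in auto)
  have b: "card Y = card (Y - X) + card (X \<inter> Y)"
    by (subst e2, rule card_Un_disjoint) (use assms in auto)
  have c: "card ((X - Y) \<union> (Y - X)) = card (X - Y) + card (Y - X)"
    by (rule card_Un_disjoint) (use assms in auto)
  show ?thesis unfolding a b c by presburger
qed

lemma vecr_symdiff: assumes "finite T1" "finite T2"
  shows "vecr A C ((T1 - T2) \<union> (T2 - T1)) = (vecr A C T1 - vecr A C T2) \<union> (vecr A C T2 - vecr A C T1)"
proof -
  have "\<And>c. {u\<in>(T1 - T2) \<union> (T2 - T1). A u c} = ({u\<in>T1. A u c} - {u\<in>T2. A u c}) \<union> ({u\<in>T2. A u c} - {u\<in>T1. A u c})"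
    by auto
  then have "\<And>c. odd (card {u\<in>(T1 - T2) \<union> (T2 - T1). A u c}) \<longleftrightarrow> (odd (card {u\<in>T1. A u c}) \<noteq> odd (card {u\<in>T2. A u c}))"
    using card_symdiff_parity[of "{u\<in>T1. A u c}" "{u\<in>T2. A u c}" for c] assms by auto
  then show ?thesis unfolding vecr_def by auto
qed

lemma vecr_insert: assumes "finite T" "x \<notin> T"
  shows "vecr A C (insert x T) = (vecr A C T - vecr A C {x}) \<union> (vecr A C {x} - vecr A C T)"
proof -
  have "insert x T = (T - {x}) \<union> ({x} - T)" using assms by auto
  then show ?thesis using vecr_symdiff[of T "{x}" A C] assms by simp
qed

lemma span_lemma:
  assumes "finite X" "finite S0" "\<forall>x\<in>X. \<exists>T\<subseteq>S0. vecr A C {x} = vecr A C T"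
  shows "\<exists>T\<subseteq>S0. vecr A C X = vecr A C T"
  using assms
proof (induction X rule: finite_induct)
  case empty
  then show ?case by (rule_tac x="{}" in exI) (simp add: vecr_def)
next
  case (insert x F)
  have "\<exists>T\<subseteq>S0. vecr A C F = vecr A C T" using insert.IH insert.prems by blast
  then obtain T1 where T1: "T1 \<subseteq> S0" "vecr A C F = vecr A C T1" by blast
  from insert.prems obtain T2 where T2: "T2 \<subseteq> S0" "vecr A C {x} = vecr A C T2" by auto
  have f: "finite T1" "finite T2" using T1(1) T2(1) insert.prems(1) finite_subset by blast+
  have "vecr A C (insert x F) = (vecr A C F - vecr A C {x}) \<union> (vecr A C {x} - vecr A C F)"
    using vecr_insert[OF insert(1,2)] .
  also have "\<dots> = vecr A C ((T1 - T2) \<union> (T2 - T1))"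
    using vecr_symdiff[OF f, of A C] T1 T2 by simp
  finally have "vecr A C (insert x F) = vecr A C ((T1 - T2) \<union> (T2 - T1))" .
  moreover have "(T1 - T2) \<union> (T2 - T1) \<subseteq> S0" using T1(1) T2(1) by auto
  ultimately show ?case by blast
qed


lemma rank_fin: "finite R \<Longrightarrow> finite (card ` {S. S \<subseteq> R \<and> rows_indep A S C})"
  by (rule finite_imageI) (rule finite_subset[of _ "Pow R"], auto)

lemma rank_ge: "finite R \<Longrightarrow> S \<subseteq> R \<Longrightarrow> rows_indep A S C \<Longrightarrow> card S \<le> rank_F2 A R C"
  unfolding rank_F2_def by (rule Max_ge) (auto intro: rank_fin)

lemma rank_attained: assumes "finite R"
  shows "\<exists>S. S \<subseteq> R \<and> rows_indep A S C \<and> card S = rank_F2 A R C"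
proof -
  have "{} \<in> {S. S \<subseteq> R \<and> rows_indep A S C}" unfolding rows_indep_def by blast
  then have ne: "card ` {S. S \<subseteq> R \<and> rows_indep A S C} \<noteq> {}" by blast
  have "rank_F2 A R C \<in> card ` {S. S \<subseteq> R \<and> rows_indep A S C}"
    unfolding rank_F2_def by (rule Max_in[OF rank_fin[OF assms] ne])
  then show ?thesis by auto
qed

lemma rank_le: assumes "finite R" "\<And>S. S \<subseteq> R \<Longrightarrow> rows_indep A S C \<Longrightarrow> card S \<le> k"
  shows "rank_F2 A R C \<le> k"
  using rank_attained[OF assms(1), of A C] assms(2) by metis

lemma exchange:
  assumes fin: "finite W" and S: "S \<subseteq> insert v W" "v \<in> S" "v \<notin> W"
    and ind: "rows_indep A S W" and av: "av \<subseteq> W"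
    and row: "\<forall>c\<in>W. A v c \<longleftrightarrow> odd (card {a\<in>av. A a c})"
  shows "\<exists>S'. S' \<subseteq> W \<and> rows_indep A S' W \<and> card S' = card S"
proof -
  define S0 where "S0 = S - {v}"
  have S0W: "S0 \<subseteq> W" using S S0_def by auto
  have finS0: "finite S0" using S0W fin finite_subset by blast
  have finav: "finite av" using av fin finite_subset by blast
  have vv: "vecr A W {v} = vecr A W av"
  proof -
    have "\<And>c. {u\<in>{v}. A u c} = (if A v c then {v} else {})" by auto
    then show ?thesis using row unfolding vecr_def by auto
  qed
  have ind0: "rows_indep A S0 W" using ind unfolding rows_indep_def S0_def by blast
  have "\<exists>x\<in>av. \<not>(\<exists>T\<subseteq>S0. vecr A W {x} = vecr A W T)"
  proof (rule ccontr)
    assume "\<not> ?thesis"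
    then have "\<forall>x\<in>av. \<exists>T\<subseteq>S0. vecr A W {x} = vecr A W T" by simp
    then obtain T where T: "T \<subseteq> S0" "vecr A W av = vecr A W T"
      using span_lemma[OF finav finS0, of A W] by blast
    have vT: "v \<notin> T" using T S0_def by auto
    have finT: "finite T" using T finS0 finite_subset by blast
    have "vecr A W (insert v T) = {}" using vecr_insert[OF finT vT, of A W] vv T(2) by auto
    moreover have "insert v T \<subseteq> S" using T S0_def S by auto
    ultimately show False using ind unfolding rows_indep_vecr by blast
  qed
  then obtain x where x: "x\<in>av" "\<not>(\<exists>T\<subseteq>S0. vecr A W {x} = vecr A W T)" by blast
  have xS0: "x \<notin> S0"
  proof
    assume "x \<in> S0"
    then have "{x} \<subseteq> S0" by auto
    then show False using x(2) by blast
  qed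
  define S' where "S' = insert x S0"
  have "rows_indep A S' W"
    unfolding rows_indep_vecr
  proof (intro allI impI)
    fix T assume T: "T \<subseteq> S' \<and> T \<noteq> {}"
    show "vecr A W T \<noteq> {}"
    proof (cases "x \<in> T")
      case False then have "T \<subseteq> S0" using T S'_def by auto
      then show ?thesis using ind0 T unfolding rows_indep_vecr by blast
    next
      case True
      define T0 where "T0 = T - {x}"
      have T0: "T0 \<subseteq> S0" "T = insert x T0" "x \<notin> T0" using T True T0_def S'_def by auto
      have finT0: "finite T0" using T0 finS0 finite_subset by blast
      have "vecr A W T = (vecr A W T0 - vecr A W {x}) \<union> (vecr A W {x} - vecr A W T0)"
        using vecr_insert[OF finT0 T0(3), of A W] T0(2) by simp
      moreover have "vecr A W {x} \<noteq> vecr A W T0" using x(2) T0(1) by blast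
      ultimately show ?thesis by blast
    qed
  qed
  moreover have "S' \<subseteq> W" using S'_def S0W x av by auto
  moreover have "card S' = card S"
  proof -
    have "S = insert v S0" using S S0_def by auto
    moreover have "v \<notin> S0" using S0_def by auto
    ultimately show ?thesis using S'_def finS0 xS0 by simp
  qed
  ultimately show ?thesis by blast
qed

lemma colfact:
  assumes finT: "finite T" and finaw: "finite aw" and T: "T \<subseteq> insert v W"
    and hW: "\<forall>u\<in>W. even (of_bool (A u w) + card {b\<in>aw. A u b})"
  shows "odd (card {u\<in>T. A u w}) \<longleftrightarrow>
     (odd (\<Sum>b\<in>aw. card {u\<in>T. A u b}) \<noteq> (v \<in> T \<and> odd (of_bool (A v w) + card {b\<in>aw. A v b})))"
proof -
  define g where "g u = of_bool (A u w) + card {b\<in>aw. A u b}" for u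
  have c1: "card {u\<in>T. A u w} = (\<Sum>u\<in>T. of_bool (A u w))"
    using card_filter_sum[OF finT, of "\<lambda>u. A u w"] by (simp add: of_bool_def)
  have e1: "card {u\<in>T. A u w} + (\<Sum>b\<in>aw. card {u\<in>T. A u b}) = (\<Sum>u\<in>T. g u)"
    unfolding c1 g_def sum.distrib using card_swap[OF finT finaw, of A] by simp
  have e2: "even (\<Sum>u\<in>T - {v}. g u)"
  proof (rule dvd_sum)
    fix u assume "u \<in> T - {v}"
    then have "u \<in> W" using T by auto
    then show "even (g u)" using hW unfolding g_def by blast
  qed
  have e3: "odd (\<Sum>u\<in>T. g u) \<longleftrightarrow> (v \<in> T \<and> odd (g v))"
  proof (cases "v \<in> T")
    case True
    then have "(\<Sum>u\<in>T. g u) = g v + (\<Sum>u\<in>T - {v}. g u)" using finT by (simp add: sum.remove)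
    then show ?thesis using e2 True by simp
  next
    case False
    then have "T - {v} = T" by auto
    then show ?thesis using e2 False by simp
  qed
  have par: "\<And>a b c::nat. a + b = c \<Longrightarrow> (odd a \<longleftrightarrow> (odd b \<noteq> odd c))" by auto
  show ?thesis using par[OF e1] e3 unfolding g_def by simp
qed


lemma vadd_cancel: "vadd (vadd a b) b = a" by (auto simp: vadd_def)

lemma bform_single: assumes "finite x" shows "bform A x {c} \<longleftrightarrow> odd (card {a\<in>x. A a c})"
proof -
  have "{(a, b). a \<in> x \<and> b \<in> {c} \<and> A a b} = (\<lambda>a. (a,c)) ` {a\<in>x. A a c}" by auto
  moreover have "inj_on (\<lambda>a. (a,c)) {a\<in>x. A a c}" by (auto intro: inj_onI)
  ultimately show ?thesis unfolding bform_def by (simp add: card_image)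
qed

lemma bform_sum: assumes "finite x" "finite y"
  shows "card {(a,b). a\<in>x \<and> b\<in>y \<and> A a b} = (\<Sum>a\<in>x. card {b\<in>y. A a b})"
proof -
  have "{(a,b). a\<in>x \<and> b\<in>y \<and> A a b} = Sigma x (\<lambda>a. {b\<in>y. A a b})" by auto
  then show ?thesis using assms by (simp add: card_SigmaI)
qed

lemma proj_spec: assumes "reducible V A W" "z \<subseteq> V"
  shows "proj_orth V A W z \<in> orth V A W \<and> vadd z (proj_orth V A W z) \<in> span_basis W"
proof -
  obtain a b where ab: "a \<in> span_basis W" "b \<in> orth V A W" "z = vadd a b"
    using assms unfolding reducible_def by blast
  have "vadd z b = a" using ab(3) vadd_cancel by simp
  then have "\<exists>x'. x' \<in> orth V A W \<and> vadd z x' \<in> span_basis W" using ab by auto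
  then show ?thesis unfolding proj_orth_def by (rule someI_ex)
qed

lemma orth_col: assumes "x \<in> orth V A W" "finite V" "c \<in> W"
  shows "even (card {a\<in>x. A a c})"
proof -
  have "x \<subseteq> V" "\<not> bform A x {c}" using assms unfolding orth_def span_basis_def by auto
  moreover have "finite x" using \<open>x \<subseteq> V\<close> assms(2) finite_subset by blast
  ultimately show ?thesis using bform_single[of x A c] by auto
qed

lemma card_insert_filter: "finite X \<Longrightarrow> w \<notin> X \<Longrightarrow> card {b\<in>insert w X. P b} = of_bool (P w) + card {b\<in>X. P b}"
proof (cases "P w")
  case True
  assume "finite X" "w \<notin> X"
  moreover have "{b\<in>insert w X. P b} = insert w {b\<in>X. P b}" using True by auto
  ultimately show ?thesis using True by simp
next
  case False
  assume "finite X" "w \<notin> X"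
  moreover have "{b\<in>insert w X. P b} = {b\<in>X. P b}" using False by auto
  ultimately show ?thesis using False by simp
qed

lemma rank_main:
  assumes fin: "finite W" and vW: "v \<notin> W" and aw: "aw \<subseteq> W" and av: "av \<subseteq> W"
    and hW: "\<forall>u\<in>W. even (of_bool (A u w) + card {b\<in>aw. A u b})"
    and row: "\<forall>c\<in>W. A v c \<longleftrightarrow> odd (card {a\<in>av. A a c})"
    and s_def: "s = odd (of_bool (A v w) + card {b\<in>aw. A v b})"
  shows "rank_F2 A (insert v W) (insert w W) = rank_F2 A W W + (if s then 1 else 0)"
proof -
  have finaw: "finite aw" using aw fin finite_subset by blast
  have cf: "odd (card {u\<in>T. A u w}) \<longleftrightarrow> (odd (\<Sum>b\<in>aw. card {u\<in>T. A u b}) \<noteq> (v \<in> T \<and> s))"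
    if "T \<subseteq> insert v W" for T
  proof -
    have "finite T" using that fin finite_subset by blast
    then show ?thesis using colfact[OF _ finaw that hW] unfolding s_def by blast
  qed
  have evsum: "even (\<Sum>b\<in>aw. card {u\<in>T. A u b})" if "\<forall>c\<in>W. even (card {u\<in>T. A u c})" for T
    using that aw by (intro dvd_sum) auto
  have drop: "rows_indep A S W" if d1: "S \<subseteq> insert v W" and d2: "v \<notin> S \<or> \<not> s" and d3: "rows_indep A S (insert w W)" for S
    unfolding rows_indep_def
  proof (intro allI impI)
    fix T assume T: "T \<subseteq> S \<and> T \<noteq> {}"
    then obtain c where c: "c \<in> insert w W" "odd (card {u\<in>T. A u c})"
      using d3 unfolding rows_indep_def by blast
    show "\<exists>c\<in>W. odd (card {u\<in>T. A u c})"
    proof (rule ccontr)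
      assume "\<not> ?thesis"
      then have all: "\<forall>c\<in>W. even (card {u\<in>T. A u c})" by blast
      then have cw: "c = w" using c by auto
      have nv: "\<not> (v \<in> T \<and> s)" using d2 T by auto
      have "T \<subseteq> insert v W" using T d1 by auto
      then show False using cf[of T] evsum[OF all] c cw nv by auto
    qed
  qed
  have mono: "rows_indep A S (insert w W)" if "rows_indep A S W" for S
    using that unfolding rows_indep_def by blast
  obtain S0 where S0: "S0 \<subseteq> W" "rows_indep A S0 W" "card S0 = rank_F2 A W W"
    using rank_attained[OF fin] by blast
  have finR: "finite (insert v W)" using fin by simp
  show ?thesis
  proof (cases s)
    case True
    have ge: "rank_F2 A W W + 1 \<le> rank_F2 A (insert v W) (insert w W)"
    proof -
      have "rows_indep A (insert v S0) (insert w W)"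
        unfolding rows_indep_def
      proof (intro allI impI)
        fix T assume T: "T \<subseteq> insert v S0 \<and> T \<noteq> {}"
        show "\<exists>c\<in>insert w W. odd (card {u\<in>T. A u c})"
        proof (cases "v \<in> T")
          case False then have "T \<subseteq> S0" using T by auto
          then show ?thesis using S0(2) T unfolding rows_indep_def by blast
        next
          case vT: True
          show ?thesis
          proof (rule ccontr)
            assume "\<not> ?thesis"
            then have all: "\<forall>c\<in>W. even (card {u\<in>T. A u c})" and ww: "even (card {u\<in>T. A u w})" by auto
            have "T \<subseteq> insert v W" using T S0 by auto
            then show False using cf[of T] evsum[OF all] vT True ww by auto
          qed
        qed
      qed
      moreover have "card (insert v S0) = card S0 + 1"
        using S0(1) vW fin finite_subset by (subst card_insert_disjoint) auto
      moreover have "insert v S0 \<subseteq> insert v W" using S0 by auto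
      ultimately show ?thesis using rank_ge[OF finR, of "insert v S0" A "insert w W"] S0(3) by auto
    qed
    have le: "rank_F2 A (insert v W) (insert w W) \<le> rank_F2 A W W + 1"
    proof (rule rank_le[OF finR])
      fix S assume S: "S \<subseteq> insert v W" "rows_indep A S (insert w W)"
      have "rows_indep A (S - {v}) (insert w W)" using S(2) unfolding rows_indep_def by blast
      then have "rows_indep A (S - {v}) W" using drop[of "S - {v}"] S(1) by auto
      then have "card (S - {v}) \<le> rank_F2 A W W" using rank_ge[OF fin, of "S - {v}"] S(1) by auto
      moreover have "card S \<le> card (S - {v}) + 1"
      proof (cases "v \<in> S")
        case True
        have "finite S" using S(1) finR finite_subset by blast
        then show ?thesis using card_Suc_Diff1[OF _ True] by simp
      next
        case False then show ?thesis by simp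
      qed
      ultimately show "card S \<le> rank_F2 A W W + 1" by simp
    qed
    show ?thesis using ge le True by simp
  next
    case False
    have ge: "rank_F2 A W W \<le> rank_F2 A (insert v W) (insert w W)"
      using rank_ge[OF finR, of S0 A "insert w W"] mono[OF S0(2)] S0 by auto
    have le: "rank_F2 A (insert v W) (insert w W) \<le> rank_F2 A W W"
    proof (rule rank_le[OF finR])
      fix S assume S: "S \<subseteq> insert v W" "rows_indep A S (insert w W)"
      have ind: "rows_indep A S W" using drop[OF S(1) _ S(2)] False by blast
      show "card S \<le> rank_F2 A W W"
      proof (cases "v \<in> S")
        case True
        obtain S' where "S' \<subseteq> W" "rows_indep A S' W" "card S' = card S"
          using exchange[OF fin S(1) True vW ind av row] by blast
        then show ?thesis using rank_ge[OF fin, of S' A W] by auto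
      next
        case False
        then have "S \<subseteq> W" using S(1) by auto
        then show ?thesis using rank_ge[OF fin, of S A W] ind by auto
      qed
    qed
    show ?thesis using ge le False by simp
  qed
qed



definition cnt :: "('v \<Rightarrow> 'v \<Rightarrow> bool) \<Rightarrow> 'v set \<Rightarrow> 'v set \<Rightarrow> nat" where
  "cnt M R C = card {f \<in> extensional R. bij_betw f R C \<and> (\<forall>u\<in>R. M u (f u))}"

lemma det_cnt: "det_F2 M R C \<longleftrightarrow> odd (cnt M R C)" by (simp add: det_F2_def cnt_def)

lemma bijset_finite: assumes "finite R" "finite C"
  shows "finite {f \<in> extensional R. bij_betw f R C \<and> P f}"
proof (rule finite_subset[of _ "PiE R (\<lambda>_. C)"])
  show "{f \<in> extensional R. bij_betw f R C \<and> P f} \<subseteq> PiE R (\<lambda>_. C)"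
    by (auto simp: PiE_def bij_betw_def)
  show "finite (PiE R (\<lambda>_. C))" using assms by (simp add: finite_PiE)
qed

definition colupd :: "('v \<Rightarrow> 'v \<Rightarrow> bool) \<Rightarrow> 'v \<Rightarrow> ('v \<Rightarrow> bool) \<Rightarrow> 'v \<Rightarrow> 'v \<Rightarrow> bool" where
  "colupd M w x = (\<lambda>u c. if c = w then x u else M u c)"

lemma det_add:
  assumes fR: "finite R" and fC: "finite C" and wC: "w \<in> C"
  shows "even (cnt (colupd M w (\<lambda>u. x u \<noteq> y u)) R C) \<longleftrightarrow>
           (even (cnt (colupd M w x) R C) \<longleftrightarrow> even (cnt (colupd M w y) R C))"
proof -
  define F0 where "F0 = {f \<in> extensional R. bij_betw f R C \<and> (\<forall>u\<in>R. f u \<noteq> w \<longrightarrow> M u (f u))}"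
  define Q where "Q z f = (\<forall>u\<in>R. f u = w \<longrightarrow> z u)" for z :: "'a \<Rightarrow> bool" and f :: "'a \<Rightarrow> 'a"
  have pt: "(\<forall>u\<in>R. colupd M w z u (f u)) \<longleftrightarrow> ((\<forall>u\<in>R. f u \<noteq> w \<longrightarrow> M u (f u)) \<and> Q z f)" for z f
    unfolding colupd_def Q_def by auto
  have key: "{f \<in> extensional R. bij_betw f R C \<and> (\<forall>u\<in>R. colupd M w z u (f u))} = {f\<in>F0. Q z f}" for z
    unfolding F0_def pt by blast
  have uniq: "Q (\<lambda>u. x u \<noteq> y u) f \<longleftrightarrow> (Q x f \<noteq> Q y f)" if "f \<in> F0" for f
  proof -
    have b: "bij_betw f R C" using that unfolding F0_def by blast
    then have "w \<in> f ` R" using wC by (simp add: bij_betw_def)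
    then obtain u0 where u0: "u0 \<in> R" "f u0 = w" by blast
    have inj: "inj_on f R" using b unfolding bij_betw_def by blast
    have "\<forall>u\<in>R. f u = w \<longrightarrow> u = u0"
    proof (intro ballI impI)
      fix u assume "u \<in> R" "f u = w"
      then show "u = u0" using inj_onD[OF inj, of u u0] u0 by simp
    qed
    then have "Q z f \<longleftrightarrow> z u0" for z unfolding Q_def using u0 by metis
    then show ?thesis by simp
  qed
  have sd: "{f\<in>F0. Q (\<lambda>u. x u \<noteq> y u) f} = ({f\<in>F0. Q x f} - {f\<in>F0. Q y f}) \<union> ({f\<in>F0. Q y f} - {f\<in>F0. Q x f})"
    using uniq by auto
  have finF0: "finite F0"
    by (rule finite_subset[OF _ bijset_finite[OF fR fC, of "\<lambda>_. True"]]) (auto simp: F0_def)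
  have fin: "finite {f\<in>F0. Q z f}" for z using finF0 by simp
  show ?thesis unfolding cnt_def key sd using card_symdiff_parity[OF fin fin] by simp
qed

lemma invol_even:
  assumes "finite X" "\<forall>x\<in>X. g x \<in> X \<and> g (g x) = x \<and> g x \<noteq> x"
  shows "even (card X)"
  using assms
proof (induction "card X" arbitrary: X rule: less_induct)
  case less
  show ?case
  proof (cases "X = {}")
    case True then show ?thesis by simp
  next
    case False
    then obtain x where x: "x \<in> X" by blast
    define Y where "Y = X - {x, g x}"
    have gx: "g x \<in> X" "g x \<noteq> x" using less.prems x by auto
    have cY: "card X = card Y + 2"
    proof -
      have "card Y = card X - card {x, g x}" unfolding Y_def
        by (rule card_Diff_subset) (use x gx less.prems in auto)
      moreover have "card {x, g x} = 2" using gx by simp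
      moreover have "card {x, g x} \<le> card X" using x gx less.prems by (intro card_mono) auto
      ultimately show ?thesis by simp
    qed
    have "\<forall>y\<in>Y. g y \<in> Y \<and> g (g y) = y \<and> g y \<noteq> y"
    proof
      fix y assume y: "y \<in> Y"
      then have yX: "y \<in> X" "y \<noteq> x" "y \<noteq> g x" unfolding Y_def by auto
      have p: "g y \<in> X" "g (g y) = y" "g y \<noteq> y" using less.prems yX by auto
      have "g y \<noteq> x" using p yX by auto
      moreover have "g y \<noteq> g x"
      proof
        assume "g y = g x"
        then have "g (g y) = g (g x)" by simp
        then show False using p less.prems x yX by auto
      qed
      ultimately show "g y \<in> Y \<and> g (g y) = y \<and> g y \<noteq> y" using p unfolding Y_def by auto
    qed
    moreover have "finite Y" using less.prems Y_def by auto
    moreover have "card Y < card X" using cY by simp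
    ultimately have "even (card Y)" using less.hyps by blast
    then show ?thesis using cY by simp
  qed
qed

lemma det_eqcol:
  assumes fR: "finite R" and fC: "finite C" and wC: "w \<in> C" and bC: "b \<in> C" and bw: "b \<noteq> w"
  shows "even (cnt (colupd M w (\<lambda>u. M u b)) R C)"
proof -
  define M' where "M' = colupd M w (\<lambda>u. M u b)"
  define X where "X = {f \<in> extensional R. bij_betw f R C \<and> (\<forall>u\<in>R. M' u (f u))}"
  define \<sigma> where "\<sigma> c = (if c = b then w else if c = w then b else c)" for c
  define g where "g f = (\<lambda>u. if u \<in> R then \<sigma> (f u) else undefined)" for f :: "'a \<Rightarrow> 'a"
  have \<sigma>\<sigma>: "\<sigma> (\<sigma> c) = c" for c unfolding \<sigma>_def by auto
  have \<sigma>bij: "bij_betw \<sigma> C C"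
    by (rule bij_betwI[of \<sigma> C C \<sigma>]) (auto simp: \<sigma>_def wC bC \<sigma>\<sigma>)
  have M'\<sigma>: "M' u (\<sigma> c) = M' u c" for u c unfolding M'_def colupd_def \<sigma>_def using bw by auto
  have "\<forall>f\<in>X. g f \<in> X \<and> g (g f) = f \<and> g f \<noteq> f"
  proof
    fix f assume f: "f \<in> X"
    then have fe: "f \<in> extensional R" and fb: "bij_betw f R C" and fs: "\<forall>u\<in>R. M' u (f u)"
      unfolding X_def by auto
    have "g f \<in> extensional R" by (simp add: extensional_def g_def)
    moreover have "bij_betw (g f) R C"
    proof -
      have "bij_betw (\<sigma> \<circ> f) R C" using bij_betw_trans[OF fb \<sigma>bij] .
      moreover have "bij_betw (g f) R C = bij_betw (\<sigma> \<circ> f) R C"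
        by (rule bij_betw_cong) (simp add: g_def)
      ultimately show ?thesis by simp
    qed
    moreover have "\<forall>u\<in>R. M' u (g f u)" using fs M'\<sigma> by (auto simp: g_def)
    ultimately have "g f \<in> X" unfolding X_def by auto
    moreover have "g (g f) = f"
    proof
      fix u show "g (g f) u = f u" using fe \<sigma>\<sigma> unfolding g_def by (auto simp: extensional_def)
    qed
    moreover have "g f \<noteq> f"
    proof
      assume eq: "g f = f"
      obtain u where u: "u \<in> R" "f u = b" using fb bC unfolding bij_betw_def by auto
      have "g f u = w" using u unfolding g_def \<sigma>_def by auto
      then show False using eq u bw by auto
    qed
    ultimately show "g f \<in> X \<and> g (g f) = f \<and> g f \<noteq> f" by blast
  qed
  moreover have "finite X" unfolding X_def by (rule bijset_finite[OF fR fC])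
  ultimately have "even (card X)" using invol_even by blast
  then show ?thesis unfolding cnt_def X_def M'_def by simp
qed


definition colop :: "('v \<Rightarrow> 'v \<Rightarrow> bool) \<Rightarrow> 'v \<Rightarrow> 'v set \<Rightarrow> 'v \<Rightarrow> 'v \<Rightarrow> bool" where
  "colop M w B = (\<lambda>u c. if c = w then (M u w \<noteq> odd (card {b\<in>B. M u b})) else M u c)"

lemma det_colop:
  assumes fR: "finite R" and fC: "finite C" and wC: "w \<in> C" and fB: "finite B" and BC: "B \<subseteq> C - {w}"
  shows "even (cnt (colop M w B) R C) \<longleftrightarrow> even (cnt M R C)"
  using fB BC
proof (induction B rule: finite_induct)
  case empty
  have "colop M w {} = M" unfolding colop_def by (intro ext) auto
  then show ?case by simp
next
  case (insert b B)
  define MB where "MB = colop M w B"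
  have bC: "b \<in> C" "b \<noteq> w" using insert.prems by auto
  have MBb: "MB u b = M u b" for u unfolding MB_def colop_def using bC by simp
  have e1: "colop M w (insert b B) = colupd MB w (\<lambda>u. MB u w \<noteq> MB u b)"
  proof (intro ext)
    fix u c
    have "card {b'\<in>insert b B. M u b'} = of_bool (M u b) + card {b'\<in>B. M u b'}"
      by (rule card_insert_filter) (use insert.hyps in auto)
    then show "colop M w (insert b B) u c = colupd MB w (\<lambda>u. MB u w \<noteq> MB u b) u c"
      unfolding colupd_def MBb unfolding MB_def colop_def by auto
  qed
  have e2: "colupd MB w (\<lambda>u. MB u w) = MB" unfolding colupd_def by (intro ext) auto
  have "even (cnt (colop M w (insert b B)) R C) \<longleftrightarrow>
          (even (cnt MB R C) \<longleftrightarrow> even (cnt (colupd MB w (\<lambda>u. MB u b)) R C))"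
    using det_add[OF fR fC wC, of MB "\<lambda>u. MB u w" "\<lambda>u. MB u b"] e1 e2 by simp
  moreover have "even (cnt (colupd MB w (\<lambda>u. MB u b)) R C)" by (rule det_eqcol[OF fR fC wC bC])
  moreover have "even (cnt MB R C) \<longleftrightarrow> even (cnt M R C)" unfolding MB_def
    using insert.IH insert.prems by simp
  ultimately show ?case by simp
qed

lemma cnt_cong: assumes "\<forall>u\<in>R. \<forall>c\<in>C. M u c = N u c"
  shows "cnt M R C = cnt N R C"
proof -
  have "{f \<in> extensional R. bij_betw f R C \<and> (\<forall>u\<in>R. M u (f u))} =
        {f \<in> extensional R. bij_betw f R C \<and> (\<forall>u\<in>R. N u (f u))}"
  proof (intro Collect_cong conj_cong refl)
    fix f assume "f \<in> extensional R" and b: "bij_betw f R C"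
    have "\<forall>u\<in>R. f u \<in> C" using b unfolding bij_betw_def by blast
    then show "(\<forall>u\<in>R. M u (f u)) = (\<forall>u\<in>R. N u (f u))" using assms by simp
  qed
  then show ?thesis unfolding cnt_def by simp
qed

lemma det_final:
  assumes fin: "finite W" and vW: "v \<notin> W" and wW: "w \<notin> W"
    and zero: "\<forall>u\<in>W. \<not> M u w"
  shows "cnt M (insert v W) (insert w W) = (if M v w then cnt M W W else 0)"
proof -
  define S1 where "S1 = {f \<in> extensional (insert v W). bij_betw f (insert v W) (insert w W) \<and> (\<forall>u\<in>insert v W. M u (f u))}"
  define S2 where "S2 = {f \<in> extensional W. bij_betw f W W \<and> (\<forall>u\<in>W. M u (f u))}"
  have fv: "f v = w" if "f \<in> S1" for f
  proof -
    have b: "bij_betw f (insert v W) (insert w W)" and s: "\<forall>u\<in>insert v W. M u (f u)"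
      using that unfolding S1_def by auto
    have "w \<in> f ` (insert v W)" using b unfolding bij_betw_def by blast
    then obtain u0 where u0: "u0 \<in> insert v W" "f u0 = w" by blast
    have "M u0 w" using s u0 by metis
    then have "u0 = v" using zero u0 by blast
    then show ?thesis using u0 by simp
  qed
  show ?thesis
  proof (cases "M v w")
    case False
    have "S1 = {}"
    proof -
      have "f \<notin> S1" for f
      proof
        assume f: "f \<in> S1"
        then have "M v (f v)" unfolding S1_def by blast
        then show False using fv[OF f] False by simp
      qed
      then show ?thesis by blast
    qed
    then show ?thesis using False unfolding cnt_def S1_def[symmetric] by simp
  next
    case True
    define h where "h g = g(v := w)" for g :: "'a \<Rightarrow> 'a"
    have inj: "inj_on h S2"
    proof (rule inj_onI)
      fix g1 g2 assume g: "g1 \<in> S2" "g2 \<in> S2" "h g1 = h g2"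
      show "g1 = g2"
      proof
        fix u
        show "g1 u = g2 u"
        proof (cases "u = v")
          case True
          have "g1 v = undefined" "g2 v = undefined" using g(1,2) vW unfolding S2_def extensional_def by auto
          then show ?thesis using True by simp
        next
          case False
          then show ?thesis using g(3) unfolding h_def by (metis fun_upd_other)
        qed
      qed
    qed
    have img: "h ` S2 = S1"
    proof
      show "h ` S2 \<subseteq> S1"
      proof
        fix f assume "f \<in> h ` S2"
        then obtain g where g: "g \<in> S2" "f = h g" by blast
        have ge: "g \<in> extensional W" and gb: "bij_betw g W W" and gs: "\<forall>u\<in>W. M u (g u)"
          using g(1) unfolding S2_def by auto
        have "f \<in> extensional (insert v W)" using ge g(2) unfolding h_def extensional_def by auto
        moreover have "bij_betw f (insert v W) (insert w W)"
        proof -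
          have "bij_betw f W W = bij_betw g W W"
            by (rule bij_betw_cong) (use vW g(2) in \<open>auto simp add: h_def\<close>)
          then have "bij_betw f W W" using gb by simp
          moreover have "f v = w" using g(2) unfolding h_def by simp
          ultimately have "bij_betw f (W \<union> {v}) (W \<union> {f v})"
            using notIn_Un_bij_betw[of v W f W] vW wW by simp
          then show ?thesis using \<open>f v = w\<close> by simp
        qed
        moreover have "\<forall>u\<in>insert v W. M u (f u)"
        proof
          fix u assume u: "u \<in> insert v W"
          show "M u (f u)"
          proof (cases "u = v")
            case True then show ?thesis using \<open>M v w\<close> g(2) unfolding h_def by simp
          next
            case False then have "u \<in> W" "f u = g u" using u g(2) unfolding h_def by auto
            then show ?thesis using gs by simp
          qed
        qed
        ultimately show "f \<in> S1" unfolding S1_def by blast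
      qed
    next
      show "S1 \<subseteq> h ` S2"
      proof
        fix f assume f: "f \<in> S1"
        have fe: "f \<in> extensional (insert v W)" and fb: "bij_betw f (insert v W) (insert w W)"
          and fs: "\<forall>u\<in>insert v W. M u (f u)" using f unfolding S1_def by auto
        have fvw: "f v = w" using fv[OF f] .
        define g where "g = restrict f W"
        have "g \<in> extensional W" unfolding g_def by simp
        moreover have "bij_betw g W W"
        proof -
          have "bij_betw f {v} {w}" using fvw by simp
          then have "bij_betw f (insert v W - {v}) (insert w W - {w})"
            by (rule bij_betw_DiffI[OF fb]) auto
          then have "bij_betw f W W" using vW wW by simp
          moreover have "bij_betw g W W = bij_betw f W W"
            by (rule bij_betw_cong) (simp add: g_def)
          ultimately show ?thesis by simp
        qed
        moreover have "\<forall>u\<in>W. M u (g u)" using fs unfolding g_def by simp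
        ultimately have "g \<in> S2" unfolding S2_def by blast
        moreover have "f = h g"
        proof
          fix u show "f u = h g u"
          proof (cases "u = v")
            case True then show ?thesis using fvw unfolding h_def by simp
          next
            case False
            show ?thesis
            proof (cases "u \<in> W")
              case True then show ?thesis using False unfolding h_def g_def by simp
            next
              case nW: False
              then have "f u = undefined" using fe False unfolding extensional_def by auto
              then show ?thesis using False nW unfolding h_def g_def by simp
            qed
          qed
        qed
        ultimately show "f \<in> h ` S2" by blast
      qed
    qed
    have "card S1 = card S2" using card_image[OF inj] img by simp
    then show ?thesis using True unfolding cnt_def S1_def[symmetric] S2_def[symmetric] by simp
  qed
qed


theorem mainTheorem5:
  fixes V W :: "'v set" and A :: "'v \<Rightarrow> 'v \<Rightarrow> bool" and v w :: 'v
  assumes "finite V"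
    and "\<forall>a b. A a b = A b a"
    and "W \<subseteq> V"
    and "reducible V A W"
    and "v \<in> V - W" and "w \<in> V - W"
  shows "(snd (Gamma V A W) v w \<longleftrightarrow> rank_F2 A (insert v W) (insert w W) > rank_F2 A W W)
    \<and> (det_F2 A W W \<longrightarrow> (snd (Gamma V A W) v w \<longleftrightarrow> det_F2 A (insert v W) (insert w W)))"
proof -
  have fV: "finite V" using assms(1) .
  have fin: "finite W" using assms(1,3) finite_subset by blast
  have vW: "v \<notin> W" "v \<in> V" and wW: "w \<notin> W" "w \<in> V" using assms(5,6) by auto
  define p where "p = proj_orth V A W {v}"
  define q where "q = proj_orth V A W {w}"
  have p: "p \<in> orth V A W" "vadd {v} p \<in> span_basis W"
    using proj_spec[OF assms(4), of "{v}"] vW unfolding p_def by auto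
  have q: "q \<in> orth V A W" "vadd {w} q \<in> span_basis W"
    using proj_spec[OF assms(4), of "{w}"] wW unfolding q_def by auto
  have pV: "p \<subseteq> V" "q \<subseteq> V" using p(1) q(1) unfolding orth_def by auto
  have fp: "finite p" "finite q" using pV fV finite_subset by auto
  have pW: "vadd {v} p \<subseteq> W" "vadd {w} q \<subseteq> W" using p(2) q(2) unfolding span_basis_def by auto
  have vp: "v \<in> p"
  proof (rule ccontr)
    assume "v \<notin> p"
    then have "v \<in> vadd {v} p" unfolding vadd_def by auto
    then show False using pW vW by auto
  qed
  have wq: "w \<in> q"
  proof (rule ccontr)
    assume "w \<notin> q"
    then have "w \<in> vadd {w} q" unfolding vadd_def by auto
    then show False using pW wW by auto
  qed
  define av where "av = p - {v}"
  define aw where "aw = q - {w}"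
  have av: "av \<subseteq> W" using pW(1) unfolding av_def vadd_def by auto
  have aw: "aw \<subseteq> W" using pW(2) unfolding aw_def vadd_def by auto
  have pins: "p = insert v av" using vp av_def by auto
  have qins: "q = insert w aw" using wq aw_def by auto
  have vav: "v \<notin> av" and waw: "w \<notin> aw" unfolding av_def aw_def by auto
  have finav: "finite av" and finaw: "finite aw" using av aw fin finite_subset by auto
  define s where "s = odd (of_bool (A v w) + card {b\<in>aw. A v b})"
  have qcol: "even (card {b\<in>q. A u b})" if "u \<in> W" for u
  proof -
    have "even (card {a\<in>q. A a u})" using orth_col[OF q(1) fV that] .
    moreover have "{a\<in>q. A a u} = {a\<in>q. A u a}" using assms(2) by auto
    ultimately show ?thesis by simp
  qed
  have cq: "card {b\<in>q. A u b} = of_bool (A u w) + card {b\<in>aw. A u b}" for u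
    unfolding qins by (rule card_insert_filter[OF finaw waw])
  have hW: "\<forall>u\<in>W. even (of_bool (A u w) + card {b\<in>aw. A u b})"
    using qcol cq by metis
  have row: "\<forall>c\<in>W. A v c \<longleftrightarrow> odd (card {a\<in>av. A a c})"
  proof
    fix c assume c: "c \<in> W"
    have "even (card {a\<in>p. A a c})" using orth_col[OF p(1) fV c] .
    moreover have "card {a\<in>p. A a c} = of_bool (A v c) + card {a\<in>av. A a c}"
      unfolding pins by (rule card_insert_filter[OF finav vav])
    ultimately show "A v c \<longleftrightarrow> odd (card {a\<in>av. A a c})" by (cases "A v c") simp_all
  qed
  have edge: "snd (Gamma V A W) v w \<longleftrightarrow> s"
  proof -
    have "snd (Gamma V A W) v w \<longleftrightarrow> bform A p q"
      unfolding Gamma_def bformW_def p_def q_def using assms(5,6) by simp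
    also have "\<dots> \<longleftrightarrow> odd (\<Sum>a\<in>p. card {b\<in>q. A a b})"
      unfolding bform_def using bform_sum[OF fp] by simp
    also have "(\<Sum>a\<in>p. card {b\<in>q. A a b}) = card {b\<in>q. A v b} + (\<Sum>a\<in>av. card {b\<in>q. A a b})"
      unfolding pins using finav vav by simp
    also have "odd \<dots> \<longleftrightarrow> odd (card {b\<in>q. A v b})"
    proof -
      have "even (\<Sum>a\<in>av. card {b\<in>q. A a b})"
        by (rule dvd_sum) (use qcol av in auto)
      then show ?thesis by simp
    qed
    also have "\<dots> \<longleftrightarrow> s" unfolding s_def cq ..
    finally show ?thesis .
  qed
  have rk: "rank_F2 A (insert v W) (insert w W) = rank_F2 A W W + (if s then 1 else 0)"
    by (rule rank_main[OF fin vW(1) aw av hW row s_def])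
  have part1: "snd (Gamma V A W) v w \<longleftrightarrow> rank_F2 A (insert v W) (insert w W) > rank_F2 A W W"
    using edge rk by simp
  have part2: "snd (Gamma V A W) v w \<longleftrightarrow> det_F2 A (insert v W) (insert w W)" if dW: "det_F2 A W W"
  proof -
    define M where "M = colop A w aw"
    have finR: "finite (insert v W)" and finC: "finite (insert w W)" using fin by auto
    have e1: "even (cnt M (insert v W) (insert w W)) \<longleftrightarrow> even (cnt A (insert v W) (insert w W))"
      unfolding M_def by (rule det_colop[OF finR finC _ finaw]) (use aw waw wW in auto)
    have zero: "\<forall>u\<in>W. \<not> M u w"
    proof
      fix u assume "u \<in> W"
      then have "even (of_bool (A u w) + card {b\<in>aw. A u b})" using hW by blast
      then show "\<not> M u w" unfolding M_def colop_def by (cases "A u w") simp_all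
    qed
    have Mvw: "M v w = s" unfolding M_def colop_def s_def by simp
    have e2: "cnt M (insert v W) (insert w W) = (if M v w then cnt M W W else 0)"
      by (rule det_final[of W v w M, OF fin vW(1) wW(1) zero])
    have e3: "cnt M W W = cnt A W W"
      by (rule cnt_cong) (use wW in \<open>auto simp: M_def colop_def\<close>)
    have "odd (cnt A W W)" using dW det_cnt by metis
    then show ?thesis using e1 e2 e3 Mvw edge det_cnt[of A "insert v W" "insert w W"] by auto
  qed
  show ?thesis using part1 part2 by blast
qed

end
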